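(* In the setting described in the context, there exist $\Delta t_0>0$ and a constant $C_S$, independent of $\Delta t$ (and of $K$), such that whenever $\Delta t=T/K\le\Delta t_0$, every solution $(\mathbf{m}^k,S^k)_{k=1,\dots,K}$ of the semi-discrete homogeneous Dirichlet problem satisfies $\|S^k\|_{L^{3/2}(\Omega)}\le C_S$ for all $0\le k\le K$.
   Context: Setting: $\Omega\subset\mathbb{R}^n$ bounded with the uniform $C^1$-regularity property, $T>0$, $V=W^3(\mathrm{div};\Omega):=\{\mathbf{v}\in(L^3)^n:\mathrm{div}\,\mathbf{v}\in L^3\}$, $Q=L^{3/2}(\Omega)$. $S^0\in W^{1,3/2}_0(\Omega)$; $\phi\in L^\infty(\Omega)$ with $0<\underline{\phi}\le\phi\le\overline{\phi}<\infty$ a.e. For each $t\in[0,T]$: $f(\cdot,t)\in L^3(\Omega)$; $\alpha(\cdot,t),\beta(\cdot,t),\gamma(\cdot,t)\in L^\infty(\Omega)$ with $0<\underline{\alpha}\le\alpha\le\overline{\alpha}<\infty$, $0<\underline{\beta}\le\beta\le\overline{\beta}<\infty$, $0<\underline{\gamma}\le\gamma\le\overline{\gamma}<\infty$ a.e.; and for all $t_1,t_2$: $\|\alpha(t_1)-\alpha(t_2)\|_{L^\infty}\le L(\alpha)|t_1-t_2|$, similarly for $\beta,\gamma$ (constants $L(\beta),L(\gamma)$), and $\|f(t_1)-f(t_2)\|_{L^3}\le L(f)|t_1-t_2|$. For $K\in\mathbb{N}$ put $\Delta t=T/K$, $t^k=k\Delta t$, $\alpha^k=\alpha(\cdot,t^k)$,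 and similarly $\beta^k,\gamma^k,f^k$; $\rho^k(p):=\gamma^k p/\sqrt{|p|}$ ($:=0$ where $p=0$). The semi-discrete homogeneous Dirichlet problem: given $S^0$, for $k=1,\dots,K$, $(\mathbf{m}^k,S^k)\in V\times Q$ satisfies $\int_\Omega(\alpha^k+\beta^k|\mathbf{m}^k|)(\mathbf{m}^k\cdot\mathbf{v})\,d\mathbf{x}-\int_\Omega\mathrm{div}(\mathbf{v})S^k\,d\mathbf{x}=0$ for all $\mathbf{v}\in V$, and $\int_\Omega\frac{\phi}{\Delta t}(\rho^k(S^k)-\rho^{k-1}(S^{k-1}))q\,d\mathbf{x}+\int_\Omega\mathrm{div}(\mathbf{m}^k)q\,d\mathbf{x}=\int_\Omega f^kq\,d\mathbf{x}$ for all $q\in Q$. *)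

theory Defs
  imports "HOL-Analysis.Analysis"
begin

text \<open>C-infinity on all of the space: a family Df of all iterated partial derivatives
  (Df is = partial derivative along the index list is), each Frechet differentiable
  with partial derivatives given by the family.\<close>
definition smooth_fun :: "(real^'n \<Rightarrow> real) \<Rightarrow> bool" where
  "smooth_fun f \<longleftrightarrow>
     (\<exists>Df :: 'n list \<Rightarrow> real^'n \<Rightarrow> real.
        Df [] = f \<and>
        (\<forall>is x. (Df is has_derivative (\<lambda>h. \<Sum>i\<in>UNIV. h $ i * Df (i # is) x)) (at x)))"

definition tsupport :: "(real^'n \<Rightarrow> real) \<Rightarrow> (real^'n) set" where
  "tsupport f = closure {x. f x \<noteq> 0}"

definition test_fn :: "(real^'n) set \<Rightarrow> (real^'n \<Rightarrow> real) \<Rightarrow> bool" where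
  "test_fn \<Omega> f \<longleftrightarrow> smooth_fun f \<and> compact (tsupport f) \<and> tsupport f \<subseteq> \<Omega>"

definition pderiv_i :: "'n \<Rightarrow> (real^'n \<Rightarrow> real) \<Rightarrow> real^'n \<Rightarrow> real" where
  "pderiv_i i f x = frechet_derivative f (at x) (axis i 1)"

definition grad :: "(real^'n \<Rightarrow> real) \<Rightarrow> real^'n \<Rightarrow> real^'n" where
  "grad f x = (\<chi> i. pderiv_i i f x)"

section \<open>Uniform C1-regularity (Adams, Sobolev Spaces, 4.10, with m = 1)\<close>

definition C1_map_on :: "(real^'n) set \<Rightarrow> (real^'n \<Rightarrow> real^'n) \<Rightarrow> bool" where
  "C1_map_on U F \<longleftrightarrow> (\<exists>D. (\<forall>x\<in>U. (F has_derivative D x) (at x)) \<and>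
      (\<forall>i k. continuous_on U (\<lambda>x. D x (axis k 1) $ i)))"

definition C1_bounded_on :: "(real^'n) set \<Rightarrow> (real^'n \<Rightarrow> real^'n) \<Rightarrow> real \<Rightarrow> bool" where
  "C1_bounded_on U F M \<longleftrightarrow> (\<forall>x\<in>U. \<forall>i. \<bar>F x $ i\<bar> \<le> M \<and>
      (\<forall>k. \<bar>frechet_derivative F (at x) (axis k 1) $ i\<bar> \<le> M))"

definition uniform_C1_regular :: "(real^'n) set \<Rightarrow> bool" where
  "uniform_C1_regular \<Omega> \<longleftrightarrow>
    (\<exists>(J :: nat set) (U :: nat \<Rightarrow> (real^'n) set) (\<Phi> :: nat \<Rightarrow> real^'n \<Rightarrow> real^'n)
       (\<Psi> :: nat \<Rightarrow> real^'n \<Rightarrow> real^'n) (i0 :: 'n) \<delta> M R.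
      \<comment> \<open>locally finite open cover of the boundary\<close>
      (\<forall>j\<in>J. open (U j)) \<and> frontier \<Omega> \<subseteq> (\<Union>j\<in>J. U j) \<and>
      (\<forall>x. \<exists>N. open N \<and> x \<in> N \<and> finite {j\<in>J. U j \<inter> N \<noteq> {}}) \<and>
      \<comment> \<open>one-to-one C1 maps of U j onto the unit ball, with inverses\<close>
      (\<forall>j\<in>J. bij_betw (\<Phi> j) (U j) (ball 0 1) \<and>
             (\<forall>x\<in>U j. \<Psi> j (\<Phi> j x) = x) \<and> (\<forall>y\<in>ball 0 1. \<Phi> j (\<Psi> j y) = y) \<and>
             C1_map_on (U j) (\<Phi> j) \<and> C1_map_on (ball 0 1) (\<Psi> j)) \<and>
      \<comment> \<open>(i)\<close>
      \<delta> > 0 \<and> {x\<in>\<Omega>. infdist x (frontier \<Omega>) < \<delta>} \<subseteq> (\<Union>j\<in>J. \<Psi> j ` ball 0 (1/2)) \<and>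
      \<comment> \<open>(ii)\<close>
      (\<forall>j\<in>J. \<Phi> j ` (U j \<inter> \<Omega>) = {y\<in>ball 0 1. y $ i0 > 0}) \<and>
      \<comment> \<open>(iii)\<close>
      (\<forall>j\<in>J. C1_bounded_on (U j) (\<Phi> j) M \<and> C1_bounded_on (ball 0 1) (\<Psi> j) M) \<and>
      \<comment> \<open>(iv): no R+1 distinct members of the cover have a common point\<close>
      (\<forall>I\<subseteq>J. finite I \<and> card I = Suc R \<longrightarrow> (\<Inter>j\<in>I. U j) = {}))"

definition Lp :: "(real^'n) set \<Rightarrow> real \<Rightarrow> (real^'n \<Rightarrow> real) \<Rightarrow> bool" where
  "Lp \<Omega> p f \<longleftrightarrow> f \<in> borel_measurable (lebesgue_on \<Omega>) \<and>
      integrable (lebesgue_on \<Omega>) (\<lambda>x. \<bar>f x\<bar> powr p)"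

definition Lp_norm :: "(real^'n) set \<Rightarrow> real \<Rightarrow> (real^'n \<Rightarrow> real) \<Rightarrow> real" where
  "Lp_norm \<Omega> p f = (\<integral>x. \<bar>f x\<bar> powr p \<partial>lebesgue_on \<Omega>) powr (1/p)"

definition Lp_vec :: "(real^'n) set \<Rightarrow> real \<Rightarrow> (real^'n \<Rightarrow> real^'n) \<Rightarrow> bool" where
  "Lp_vec \<Omega> p v \<longleftrightarrow> v \<in> borel_measurable (lebesgue_on \<Omega>) \<and>
      integrable (lebesgue_on \<Omega>) (\<lambda>x. norm (v x) powr p)"

definition Lp_vec_norm :: "(real^'n) set \<Rightarrow> real \<Rightarrow> (real^'n \<Rightarrow> real^'n) \<Rightarrow> real" where
  "Lp_vec_norm \<Omega> p v = (\<integral>x. norm (v x) powr p \<partial>lebesgue_on \<Omega>) powr (1/p)"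

definition Linf_between :: "(real^'n) set \<Rightarrow> real \<Rightarrow> real \<Rightarrow> (real^'n \<Rightarrow> real) \<Rightarrow> bool" where
  "Linf_between \<Omega> lo hi f \<longleftrightarrow> f \<in> borel_measurable (lebesgue_on \<Omega>) \<and>
      (AE x in lebesgue_on \<Omega>. lo \<le> f x \<and> f x \<le> hi)"

definition weak_div :: "(real^'n) set \<Rightarrow> (real^'n \<Rightarrow> real^'n) \<Rightarrow> (real^'n \<Rightarrow> real) \<Rightarrow> bool" where
  "weak_div \<Omega> v g \<longleftrightarrow> (\<forall>\<phi>. test_fn \<Omega> \<phi> \<longrightarrow>
      (\<integral>x. v x \<bullet> grad \<phi> x \<partial>lebesgue_on \<Omega>) = - (\<integral>x. g x * \<phi> x \<partial>lebesgue_on \<Omega>))"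

definition weak_grad :: "(real^'n) set \<Rightarrow> (real^'n \<Rightarrow> real) \<Rightarrow> (real^'n \<Rightarrow> real^'n) \<Rightarrow> bool" where
  "weak_grad \<Omega> u G \<longleftrightarrow> (\<forall>\<phi>. test_fn \<Omega> \<phi> \<longrightarrow> (\<forall>i.
      (\<integral>x. u x * pderiv_i i \<phi> x \<partial>lebesgue_on \<Omega>) = - (\<integral>x. G x $ i * \<phi> x \<partial>lebesgue_on \<Omega>)))"

definition W_div :: "(real^'n) set \<Rightarrow> real \<Rightarrow> (real^'n \<Rightarrow> real^'n) \<Rightarrow> (real^'n \<Rightarrow> real) \<Rightarrow> bool" where
  "W_div \<Omega> p v g \<longleftrightarrow> Lp_vec \<Omega> p v \<and> Lp \<Omega> p g \<and> weak_div \<Omega> v g"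

definition W1p0 :: "(real^'n) set \<Rightarrow> real \<Rightarrow> (real^'n \<Rightarrow> real) \<Rightarrow> bool" where
  "W1p0 \<Omega> p u \<longleftrightarrow> Lp \<Omega> p u \<and> (\<exists>G. Lp_vec \<Omega> p G \<and> weak_grad \<Omega> u G \<and>
      (\<exists>\<phi>s :: nat \<Rightarrow> real^'n \<Rightarrow> real. (\<forall>j. test_fn \<Omega> (\<phi>s j)) \<and>
         (\<lambda>j. Lp_norm \<Omega> p (\<lambda>x. \<phi>s j x - u x)) \<longlonglongrightarrow> 0 \<and>
         (\<lambda>j. Lp_vec_norm \<Omega> p (\<lambda>x. grad (\<phi>s j) x - G x)) \<longlonglongrightarrow> 0))"

definition rho :: "(real^'n \<Rightarrow> real \<Rightarrow> real) \<Rightarrow> real \<Rightarrow> real^'n \<Rightarrow> real \<Rightarrow> real" where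
  "rho \<gamma> t x p = (if p = 0 then 0 else \<gamma> x t * p / sqrt \<bar>p\<bar>)"

definition semidiscrete_solution ::
  "(real^'n) set \<Rightarrow> real \<Rightarrow> (real^'n \<Rightarrow> real) \<Rightarrow> (real^'n \<Rightarrow> real \<Rightarrow> real) \<Rightarrow>
   (real^'n \<Rightarrow> real \<Rightarrow> real) \<Rightarrow> (real^'n \<Rightarrow> real \<Rightarrow> real) \<Rightarrow> (real^'n \<Rightarrow> real \<Rightarrow> real) \<Rightarrow>
   (real^'n \<Rightarrow> real) \<Rightarrow> nat \<Rightarrow> (nat \<Rightarrow> real^'n \<Rightarrow> real^'n) \<Rightarrow> (nat \<Rightarrow> real^'n \<Rightarrow> real) \<Rightarrow> bool" where
  "semidiscrete_solution \<Omega> T \<phi> \<alpha> \<beta> \<gamma> f S0 K m S \<longleftrightarrow>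
    (let dt = T / real K in
     S 0 = S0 \<and>
     (\<forall>k\<in>{1..K}. let tk = real k * dt; tk' = real (k - 1) * dt in
        Lp \<Omega> (3/2) (S k) \<and>
        (\<exists>dm. W_div \<Omega> 3 (m k) dm \<and>
          (\<forall>v g. W_div \<Omega> 3 v g \<longrightarrow>
             (\<integral>x. (\<alpha> x tk + \<beta> x tk * norm (m k x)) * (m k x \<bullet> v x) \<partial>lebesgue_on \<Omega>)
             - (\<integral>x. g x * S k x \<partial>lebesgue_on \<Omega>) = 0) \<and>
          (\<forall>q. Lp \<Omega> (3/2) q \<longrightarrow>
             (\<integral>x. \<phi> x / dt * (rho \<gamma> tk x (S k x) - rho \<gamma> tk' x (S (k - 1) x)) * q x \<partial>lebesgue_on \<Omega>)
             + (\<integral>x. dm x * q x \<partial>lebesgue_on \<Omega>)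
             = (\<integral>x. f x tk * q x \<partial>lebesgue_on \<Omega>)))))"

end

theory Submission imports Defs begin

lemma young3: fixes u w :: real assumes "0 \<le> u" "0 \<le> w"
  shows "u * w^2 \<le> u^3/3 + 2*w^3/3"
proof -
  have "0 \<le> (u-w)^2 * (u+2*w)" using assms by simp
  then show ?thesis by (simp add: power2_eq_square power3_eq_cube algebra_simps)
qed

lemma P_eq: "\<bar>s::real\<bar> powr (3/2) = sqrt \<bar>s\<bar> ^ 3"
proof -
  have "\<bar>s\<bar> powr (3/2) = (\<bar>s\<bar> powr (1/2)) powr 3" by (simp add: powr_powr)
  also have "\<dots> = sqrt \<bar>s\<bar> powr (real 3)" by (simp add: powr_half_sqrt)
  also have "\<dots> = sqrt \<bar>s\<bar> ^ 3" by (rule powr_realpow') auto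
  finally show ?thesis .
qed

lemma abs3: "\<bar>s::real\<bar> powr 3 = \<bar>s\<bar> ^ 3"
  using powr_realpow'[of "\<bar>s\<bar>" 3] by simp

lemma rho_eq: "rho \<gamma> t x s = \<gamma> x t * (sgn s * sqrt \<bar>s\<bar>)"
proof (cases "s = 0")
  case False
  have "s / sqrt \<bar>s\<bar> = sgn s * sqrt \<bar>s\<bar>"
    using False by (cases "s > 0") (auto simp: field_simps real_sqrt_mult[symmetric] sgn_if abs_if)
  then show ?thesis using False by (simp add: rho_def times_divide_eq_right[symmetric] del: times_divide_eq_right)
qed (simp add: rho_def)

lemma aw_lem: "sgn a * sqrt\<bar>a::real\<bar> * a = sqrt\<bar>a\<bar>^3"
proof -
  have 1: "sgn a * a = \<bar>a\<bar>" by (cases rule: linorder_cases[of a 0]) auto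
  have "sgn a * sqrt\<bar>a\<bar> * a = sqrt\<bar>a\<bar> * (sgn a * a)" by (simp only: mult_ac)
  also have "\<dots> = sqrt\<bar>a\<bar> * sqrt\<bar>a\<bar>^2" by (simp only: 1 real_sqrt_pow2_iff) simp
  also have "\<dots> = sqrt\<bar>a\<bar>^3" by (simp only: power2_eq_square power3_eq_cube)
  finally show ?thesis .
qed

lemma bw_lem: "\<bar>sgn b * sqrt\<bar>b\<bar> * (a::real)\<bar> \<le> sqrt\<bar>b\<bar> * sqrt\<bar>a\<bar>^2"
proof -
  have "\<bar>sgn b * sqrt\<bar>b\<bar> * a\<bar> = \<bar>sgn b\<bar> * sqrt\<bar>b\<bar> * \<bar>a\<bar>" by (simp add: abs_mult)
  also have "\<dots> \<le> 1 * sqrt\<bar>b\<bar> * \<bar>a\<bar>" by (intro mult_right_mono) (auto simp: abs_sgn_eq)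
  finally show ?thesis by simp
qed

lemma ptw_lower:
  fixes p g1 g0 a b dt L :: real
  assumes "0 \<le> p" "0 < dt" "0 \<le> g0" "g0 \<le> g1 + L*dt"
  shows "p * g1 * (sqrt\<bar>a\<bar>^3)/3/dt - p * g0 * (sqrt\<bar>b\<bar>^3)/3/dt - (2/3*L) * (p * sqrt\<bar>a\<bar>^3)
     \<le> p / dt * (g1 * (sgn a * sqrt\<bar>a\<bar>) - g0 * (sgn b * sqrt\<bar>b\<bar>)) * a"
proof -
  define u where "u = sqrt\<bar>b\<bar>"
  define w where "w = sqrt\<bar>a\<bar>"
  have u0: "0 \<le> u" and w0: "0 \<le> w" by (auto simp: u_def w_def)
  have aw: "sgn a * sqrt\<bar>a\<bar> * a = w^3" unfolding w_def by (rule aw_lem)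
  have bw: "\<bar>sgn b * sqrt\<bar>b\<bar> * a\<bar> \<le> u * w^2" unfolding u_def w_def by (rule bw_lem)
  have y: "u*w^2 \<le> u^3/3 + 2*w^3/3" by (rule young3[OF u0 w0])
  have key: "g1 * w^3 - g0 * (sgn b * sqrt\<bar>b\<bar> * a) \<ge> g1*w^3/3 - g0*u^3/3 - 2/3*L*dt*w^3"
  proof -
    have "g0 * (sgn b * sqrt\<bar>b\<bar> * a) \<le> g0 * (u^3/3 + 2*w^3/3)"
      using bw y assms(3) by (meson abs_le_D1 mult_left_mono order_trans)
    moreover have "g0 * (2*w^3/3) \<le> (g1 + L*dt) * (2*w^3/3)"
      using assms(4) w0 by (intro mult_right_mono) auto
    ultimately show ?thesis by (simp add: algebra_simps)
  qed
  have "p / dt * (g1 * (sgn a * sqrt\<bar>a\<bar>) - g0 * (sgn b * sqrt\<bar>b\<bar>)) * a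
      = p / dt * (g1 * w^3 - g0 * (sgn b * sqrt\<bar>b\<bar> * a))"
    using aw by (simp only: right_diff_distrib left_diff_distrib mult.assoc)
  also have "\<dots> \<ge> p / dt * (g1*w^3/3 - g0*u^3/3 - 2/3*L*dt*w^3)"
    using key assms by (intro mult_left_mono) auto
  also have "p / dt * (g1*w^3/3 - g0*u^3/3 - 2/3*L*dt*w^3) = p * g1 * (sqrt\<bar>a\<bar>^3)/3/dt - p * g0 * (sqrt\<bar>b\<bar>^3)/3/dt - (2/3*L) * (p * sqrt\<bar>a\<bar>^3)"
    using assms(2) unfolding u_def w_def by (simp add: field_simps)
  finally show ?thesis .
qed
lemma ptw_abs:
  fixes p g1 g0 a b dt :: real
  assumes "0 \<le> p" "p \<le> pu" "0 < dt" "0 \<le> g0" "g0 \<le> gu" "0 \<le> g1" "g1 \<le> gu"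
  shows "\<bar>p / dt * (g1 * (sgn a * sqrt\<bar>a\<bar>) - g0 * (sgn b * sqrt\<bar>b\<bar>)) * a\<bar>
     \<le> pu / dt * gu * (2 * sqrt\<bar>a\<bar>^3 + sqrt\<bar>b\<bar>^3)"
proof -
  define u where "u = sqrt\<bar>b\<bar>"
  define w where "w = sqrt\<bar>a\<bar>"
  have u0: "0 \<le> u" and w0: "0 \<le> w" by (auto simp: u_def w_def)
  have aw: "\<bar>sgn a * sqrt\<bar>a\<bar> * a\<bar> = w^3" unfolding w_def aw_lem by simp
  have bw: "\<bar>sgn b * sqrt\<bar>b\<bar> * a\<bar> \<le> u^3 + w^3"
  proof -
    have "\<bar>sgn b * sqrt\<bar>b\<bar> * a\<bar> \<le> u * w^2" unfolding u_def w_def by (rule bw_lem)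
    also have "\<dots> \<le> u^3/3 + 2*w^3/3" by (rule young3[OF u0 w0])
    also have "\<dots> \<le> u^3 + w^3"
    proof -
      have "0 \<le> u^3" "0 \<le> w^3" using u0 w0 by simp_all
      then show ?thesis by linarith
    qed
    finally show ?thesis .
  qed
  have "p / dt * (g1 * (sgn a * sqrt\<bar>a\<bar>) - g0 * (sgn b * sqrt\<bar>b\<bar>)) * a
     = (p / dt) * (g1 * (sgn a * sqrt\<bar>a\<bar> * a) - g0 * (sgn b * sqrt\<bar>b\<bar> * a))"
    by (simp only: right_diff_distrib left_diff_distrib mult.assoc)
  then have "\<bar>p / dt * (g1 * (sgn a * sqrt\<bar>a\<bar>) - g0 * (sgn b * sqrt\<bar>b\<bar>)) * a\<bar>
     = (p / dt) * \<bar>g1 * (sgn a * sqrt\<bar>a\<bar> * a) - g0 * (sgn b * sqrt\<bar>b\<bar> * a)\<bar>"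
    by (simp only: abs_mult abs_of_nonneg[OF divide_nonneg_pos[OF assms(1,3)]])
  also have "\<dots> \<le> (pu / dt) * (gu * w^3 + gu * (u^3 + w^3))"
  proof (rule mult_mono)
    show "p / dt \<le> pu / dt" using assms by (simp add: divide_right_mono)
    show "\<bar>g1 * (sgn a * sqrt\<bar>a\<bar> * a) - g0 * (sgn b * sqrt\<bar>b\<bar> * a)\<bar> \<le> gu * w^3 + gu * (u^3 + w^3)"
    proof -
      have t: "\<bar>g1 * (sgn a * sqrt\<bar>a\<bar> * a) - g0 * (sgn b * sqrt\<bar>b\<bar> * a)\<bar>
         \<le> \<bar>g1 * (sgn a * sqrt\<bar>a\<bar> * a)\<bar> + \<bar>g0 * (sgn b * sqrt\<bar>b\<bar> * a)\<bar>" by (rule abs_triangle_ineq4)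
      have h1: "\<bar>g1 * (sgn a * sqrt\<bar>a\<bar> * a)\<bar> \<le> gu * w^3"
        unfolding abs_mult[of g1 "sgn a * sqrt\<bar>a\<bar> * a"] aw using assms(6,7) w0 by (intro mult_right_mono) auto
      have h2: "\<bar>g0 * (sgn b * sqrt\<bar>b\<bar> * a)\<bar> \<le> gu * (u^3 + w^3)"
        unfolding abs_mult[of g0 "sgn b * sqrt\<bar>b\<bar> * a"] using assms(4,5) bw u0 w0 by (intro mult_mono) auto
      from t h1 h2 show ?thesis by linarith
    qed
    show "0 \<le> pu / dt" using assms by simp
    show "0 \<le> \<bar>g1 * (sgn a * sqrt\<bar>a\<bar> * a) - g0 * (sgn b * sqrt\<bar>b\<bar> * a)\<bar>" by simp
  qed
  also have "\<dots> = pu / dt * gu * (2 * sqrt\<bar>a\<bar>^3 + sqrt\<bar>b\<bar>^3)"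
    unfolding u_def w_def by (simp add: algebra_simps)
  finally show ?thesis .
qed
lemma ptw_f: fixes fk a :: real shows "fk * a \<le> \<bar>fk\<bar>^3/3 + 2 * sqrt\<bar>a\<bar>^3/3"
proof -
  have "fk * a \<le> \<bar>fk\<bar> * sqrt\<bar>a\<bar>^2" by (simp add: abs_mult[symmetric])
  also have "\<dots> \<le> \<bar>fk\<bar>^3/3 + 2 * sqrt\<bar>a\<bar>^3/3" by (rule young3) auto
  finally show ?thesis .
qed

lemma bnd3: fixes p g P :: real assumes "0\<le>p" "p\<le>pu" "0\<le>g" "g\<le>gu" "0\<le>P"
  shows "\<bar>p*g*P/3\<bar> \<le> \<bar>pu*gu*P\<bar>"
proof -
  have "p*g \<le> pu*gu" using assms by (intro mult_mono) auto
  then have "p*g*P \<le> pu*gu*P" using assms by (intro mult_right_mono) auto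
  moreover have "0 \<le> p*g*P" using assms by simp
  ultimately show ?thesis by simp
qed

lemma bnd2: fixes p P :: real assumes "0\<le>p" "p\<le>pu" "0\<le>P"
  shows "\<bar>p*P\<bar> \<le> \<bar>pu*P\<bar>"
  using assms mult_right_mono[of p pu P] by simp

lemma step:
  fixes M :: "'a measure" and p g1 g0 a b fk :: "'a \<Rightarrow> real"
  assumes [measurable]: "p \<in> borel_measurable M" "g1 \<in> borel_measurable M" "g0 \<in> borel_measurable M"
     "a \<in> borel_measurable M" "b \<in> borel_measurable M" "fk \<in> borel_measurable M"
  and ia: "integrable M (\<lambda>x. sqrt\<bar>a x\<bar>^3)" and ib: "integrable M (\<lambda>x. sqrt\<bar>b x\<bar>^3)"
  and iff: "integrable M (\<lambda>x. \<bar>fk x\<bar>^3)"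
  and ae: "AE x in M. pl \<le> p x \<and> p x \<le> pu \<and> gl \<le> g1 x \<and> g1 x \<le> gu \<and> gl \<le> g0 x \<and> g0 x \<le> gu \<and> g0 x \<le> g1 x + L*dt"
  and dt: "0<dt" and L: "0\<le>L" and pl: "0<pl" and gl: "0<gl" and pu: "pl \<le> pu" and gu: "gl \<le> gu"
  and eq: "(\<integral>x. p x / dt * (g1 x * (sgn (a x) * sqrt\<bar>a x\<bar>) - g0 x * (sgn (b x) * sqrt\<bar>b x\<bar>)) * a x \<partial>M) + D = (\<integral>x. fk x * a x \<partial>M)"
  and D: "0 \<le> D"
  shows "(\<integral>x. p x * g1 x * sqrt\<bar>a x\<bar>^3/3 \<partial>M) \<le> (\<integral>x. p x * g0 x * sqrt\<bar>b x\<bar>^3/3 \<partial>M)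
     + dt * (\<integral>x. \<bar>fk x\<bar>^3/3 \<partial>M) + dt * (2*(1+L*pu)/(pl*gl)) * (\<integral>x. p x * g1 x * sqrt\<bar>a x\<bar>^3/3 \<partial>M)
   \<and> pl*gl*(\<integral>x. sqrt\<bar>a x\<bar>^3 \<partial>M) \<le> 3*(\<integral>x. p x * g1 x * sqrt\<bar>a x\<bar>^3/3 \<partial>M)"
proof -
  define E1 where "E1 = (\<integral>x. p x * g1 x * sqrt\<bar>a x\<bar>^3/3 \<partial>M)"
  define E0 where "E0 = (\<integral>x. p x * g0 x * sqrt\<bar>b x\<bar>^3/3 \<partial>M)"
  define F where "F = (\<integral>x. \<bar>fk x\<bar>^3/3 \<partial>M)"
  define Na where "Na = (\<integral>x. sqrt\<bar>a x\<bar>^3 \<partial>M)"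
  define NPa where "NPa = (\<integral>x. p x * sqrt\<bar>a x\<bar>^3 \<partial>M)"
  have iE1: "integrable M (\<lambda>x. p x * g1 x * sqrt\<bar>a x\<bar>^3/3)"
    apply (rule Bochner_Integration.integrable_bound[where f="\<lambda>x. pu * gu * sqrt\<bar>a x\<bar>^3"])
    using ia apply simp
     apply measurable
    using ae apply eventually_elim
    using pl gl unfolding real_norm_def by (intro bnd3) auto
  have iE0: "integrable M (\<lambda>x. p x * g0 x * sqrt\<bar>b x\<bar>^3/3)"
    apply (rule Bochner_Integration.integrable_bound[where f="\<lambda>x. pu * gu * sqrt\<bar>b x\<bar>^3"])
    using ib apply simp
     apply measurable
    using ae apply eventually_elim
    using pl gl unfolding real_norm_def by (intro bnd3) auto
  have iNPa: "integrable M (\<lambda>x. p x * sqrt\<bar>a x\<bar>^3)"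
    apply (rule Bochner_Integration.integrable_bound[where f="\<lambda>x. pu * sqrt\<bar>a x\<bar>^3"])
    using ia apply simp
     apply measurable
    using ae apply eventually_elim
    using pl gl unfolding real_norm_def by (intro bnd2) auto
  have iL: "integrable M (\<lambda>x. p x / dt * (g1 x * (sgn (a x) * sqrt\<bar>a x\<bar>) - g0 x * (sgn (b x) * sqrt\<bar>b x\<bar>)) * a x)"
    apply (rule Bochner_Integration.integrable_bound[where f="\<lambda>x. pu / dt * gu * (2 * sqrt\<bar>a x\<bar>^3 + sqrt\<bar>b x\<bar>^3)"])
    using ia ib apply simp
     apply measurable
    using ae apply eventually_elim
    subgoal for x
      using ptw_abs[of "p x" pu dt "g0 x" gu "g1 x" "a x" "b x"] pl gl dt
      by (auto simp: abs_mult)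
    done
  have i1: "integrable M (\<lambda>x. p x * g1 x * sqrt\<bar>a x\<bar>^3/3/dt)" using iE1 by (rule integrable_divide_zero)
  have i2: "integrable M (\<lambda>x. p x * g0 x * sqrt\<bar>b x\<bar>^3/3/dt)" using iE0 by (rule integrable_divide_zero)
  have i3: "integrable M (\<lambda>x. (2/3*L) * (p x * sqrt\<bar>a x\<bar>^3))" using iNPa by simp
  have low: "E1/dt - E0/dt - (2/3*L) * NPa \<le> (\<integral>x. p x / dt * (g1 x * (sgn (a x) * sqrt\<bar>a x\<bar>) - g0 x * (sgn (b x) * sqrt\<bar>b x\<bar>)) * a x \<partial>M)"
  proof -
    have "E1/dt - E0/dt - (2/3*L) * NPa = (\<integral>x. p x * g1 x * sqrt\<bar>a x\<bar>^3/3/dt - p x*g0 x* sqrt\<bar>b x\<bar>^3/3/dt - (2/3*L) * (p x * sqrt\<bar>a x\<bar>^3) \<partial>M)"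
    proof -
      have "(\<integral>x. p x * g1 x * sqrt\<bar>a x\<bar>^3/3/dt - p x * g0 x * sqrt\<bar>b x\<bar>^3/3/dt - (2/3*L) * (p x * sqrt\<bar>a x\<bar>^3) \<partial>M)
         = (\<integral>x. p x * g1 x * sqrt\<bar>a x\<bar>^3/3/dt - p x * g0 x * sqrt\<bar>b x\<bar>^3/3/dt \<partial>M) - (\<integral>x. (2/3*L) * (p x * sqrt\<bar>a x\<bar>^3) \<partial>M)"
        by (rule Bochner_Integration.integral_diff[OF Bochner_Integration.integrable_diff[OF i1 i2] i3])
      also have "\<dots> = (\<integral>x. p x * g1 x * sqrt\<bar>a x\<bar>^3/3/dt \<partial>M) - (\<integral>x. p x * g0 x * sqrt\<bar>b x\<bar>^3/3/dt \<partial>M) - (\<integral>x. (2/3*L) * (p x * sqrt\<bar>a x\<bar>^3) \<partial>M)"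
        by (simp only: Bochner_Integration.integral_diff[OF i1 i2])
      also have "\<dots> = E1/dt - E0/dt - (2/3*L) * NPa"
        unfolding E1_def E0_def NPa_def by (simp only: integral_divide_zero integral_mult_right_zero)
      finally show ?thesis by simp
    qed
    also have "\<dots> \<le> (\<integral>x. p x / dt * (g1 x * (sgn (a x) * sqrt\<bar>a x\<bar>) - g0 x * (sgn (b x) * sqrt\<bar>b x\<bar>)) * a x \<partial>M)"
      apply (rule integral_mono_AE)
        apply (rule Bochner_Integration.integrable_diff[OF Bochner_Integration.integrable_diff[OF i1 i2] i3])
       apply (rule iL)
      using ae apply eventually_elim
      using ptw_lower pl gl dt by auto
    finally show ?thesis .
  qed
  have up: "(\<integral>x. fk x * a x \<partial>M) \<le> F + 2/3 * Na"
  proof -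
    have "(\<integral>x. fk x * a x \<partial>M) \<le> (\<integral>x. \<bar>fk x\<bar>^3/3 + 2 * sqrt\<bar>a x\<bar>^3/3 \<partial>M)"
      apply (rule integral_mono_AE')
      using iff ia apply simp
      using ptw_f apply simp
      by simp
    also have "\<dots> = F + 2/3 * Na" using iff ia by (simp add: F_def Na_def)
    finally show ?thesis .
  qed
  have NPa_le: "NPa \<le> pu * Na"
  proof -
    have "NPa \<le> (\<integral>x. pu * sqrt\<bar>a x\<bar>^3 \<partial>M)" unfolding NPa_def
      apply (rule integral_mono_AE[OF iNPa])
      using ia apply simp
      using ae apply eventually_elim by (auto intro!: mult_right_mono)
    then show ?thesis by (simp add: Na_def)
  qed
  have Na_le: "pl * gl * Na \<le> 3 * E1"
  proof -
    have "(\<integral>x. pl * gl * sqrt\<bar>a x\<bar>^3 \<partial>M) \<le> (\<integral>x. 3 * (p x * g1 x * sqrt\<bar>a x\<bar>^3/3) \<partial>M)"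
      apply (rule integral_mono_AE)
        using ia apply simp
       apply (rule integrable_mult_right[OF iE1])
      using ae apply eventually_elim using pl gl by (auto intro!: mult_right_mono mult_mono)
    then show ?thesis using iE1 by (simp add: Na_def E1_def)
  qed
  have "E1/dt - E0/dt - (2/3*L) * NPa \<le> F + 2/3 * Na" using low up eq D by linarith
  moreover have "(2/3*L) * NPa \<le> (2/3*L) * (pu*Na)" using NPa_le L by (intro mult_left_mono) auto
  ultimately have "E1/dt - E0/dt \<le> F + 2/3*Na + (2/3*L) * (pu*Na)" by linarith
  also have "\<dots> = F + 2/3*(1 + L*pu) * Na" by (simp add: algebra_simps)
  also have "\<dots> \<le> F + 2*(1+L*pu)/(pl*gl) * E1"
  proof -
    have "Na \<le> 3 * E1 / (pl*gl)" using Na_le pl gl by (simp add: pos_le_divide_eq mult.commute)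
    then have "2/3*(1 + L*pu) * Na \<le> 2/3*(1 + L*pu) * (3 * E1 / (pl*gl))"
      using L pl pu by (intro mult_left_mono) auto
    also have "\<dots> = 2*(1+L*pu)/(pl*gl) * E1" by simp
    finally show ?thesis by simp
  qed
  finally have "(E1 - E0)/dt \<le> F + 2*(1+L*pu)/(pl*gl) * E1" by (simp add: diff_divide_distrib)
  then have "E1 - E0 \<le> (F + 2*(1+L*pu)/(pl*gl) * E1) * dt" using dt by (simp add: pos_divide_le_eq)
  then have main: "E1 \<le> E0 + dt*F + dt * (2*(1+L*pu)/(pl*gl)) * E1" by (simp add: algebra_simps)
  show ?thesis using main Na_le unfolding E1_def E0_def F_def Na_def by (rule conjI)
qed

lemma cube_sum: fixes u v :: real assumes "0\<le>u" "0\<le>v" shows "(u+v)^3 \<le> 4*(u^3+v^3)"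
proof -
  have "0 \<le> 3*(u+v)*(u-v)^2" using assms by simp
  then show ?thesis by (simp add: power2_eq_square power3_eq_cube algebra_simps)
qed

lemma cube_tri: fixes x y :: real shows "\<bar>x\<bar>^3 \<le> 4*(\<bar>x-y\<bar>^3+\<bar>y\<bar>^3)"
proof -
  have "\<bar>x\<bar> \<le> \<bar>x-y\<bar> + \<bar>y\<bar>" by linarith
  then have "\<bar>x\<bar>^3 \<le> (\<bar>x-y\<bar> + \<bar>y\<bar>)^3" by (intro power_mono) auto
  also have "\<dots> \<le> 4*(\<bar>x-y\<bar>^3+\<bar>y\<bar>^3)" by (rule cube_sum) auto
  finally show ?thesis .
qed

lemma cube_diff: fixes x y :: real shows "\<bar>x-y\<bar>^3 \<le> 4*(\<bar>x\<bar>^3+\<bar>y\<bar>^3)"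
proof -
  have "\<bar>x-y\<bar> \<le> \<bar>x\<bar> + \<bar>y\<bar>" by linarith
  then have "\<bar>x-y\<bar>^3 \<le> (\<bar>x\<bar> + \<bar>y\<bar>)^3" by (intro power_mono) auto
  also have "\<dots> \<le> 4*(\<bar>x\<bar>^3+\<bar>y\<bar>^3)" by (rule cube_sum) auto
  finally show ?thesis .
qed

lemma gron_step: fixes E1 Y x :: real assumes "E1 \<le> Y + x*E1" "0 \<le> E1" "0 \<le> x" "x \<le> 1/2"
  shows "E1 \<le> (1+2*x)*Y"
proof -
  have "E1*(1-x) \<le> Y" using assms(1) by (simp add: algebra_simps)
  moreover have "1 \<le> (1+2*x)*(1-x)"
  proof -
    have "0 \<le> x*(1-2*x)" using assms(3,4) by (intro mult_nonneg_nonneg) auto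
    then show ?thesis by (simp add: algebra_simps power2_eq_square)
  qed
  ultimately have "E1 \<le> E1*((1+2*x)*(1-x))" "E1*((1+2*x)*(1-x)) \<le> (1+2*x)*Y"
    using assms(2,3) mult_left_mono[of 1 "(1+2*x)*(1-x)" E1] mult_left_mono[of "E1*(1-x)" Y "1+2*x"]
    by (auto simp: algebra_simps)
  then show ?thesis by linarith
qed

theorem lemma3p1:
  fixes \<Omega> :: "(real^'n) set" and T :: real
    and \<phi> :: "real^'n \<Rightarrow> real" and S0 :: "real^'n \<Rightarrow> real"
    and \<alpha> \<beta> \<gamma> f :: "real^'n \<Rightarrow> real \<Rightarrow> real"
    and \<phi>l \<phi>u \<alpha>l \<alpha>u \<beta>l \<beta>u \<gamma>l \<gamma>u L\<alpha> L\<beta> L\<gamma> Lf :: real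
  assumes "open \<Omega>" and "bounded \<Omega>" and "uniform_C1_regular \<Omega>"
    and "T > 0"
    and "W1p0 \<Omega> (3/2) S0"
    and "0 < \<phi>l" "\<phi>l \<le> \<phi>u" "Linf_between \<Omega> \<phi>l \<phi>u \<phi>"
    and "0 < \<alpha>l" "\<alpha>l \<le> \<alpha>u" and "0 < \<beta>l" "\<beta>l \<le> \<beta>u" and "0 < \<gamma>l" "\<gamma>l \<le> \<gamma>u"
    and "\<And>t. t \<in> {0..T} \<Longrightarrow> Lp \<Omega> 3 (\<lambda>x. f x t)"
    and "\<And>t. t \<in> {0..T} \<Longrightarrow> Linf_between \<Omega> \<alpha>l \<alpha>u (\<lambda>x. \<alpha> x t)"
    and "\<And>t. t \<in> {0..T} \<Longrightarrow> Linf_between \<Omega> \<beta>l \<beta>u (\<lambda>x. \<beta> x t)"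
    and "\<And>t. t \<in> {0..T} \<Longrightarrow> Linf_between \<Omega> \<gamma>l \<gamma>u (\<lambda>x. \<gamma> x t)"
    and "\<And>t1 t2. t1 \<in> {0..T} \<Longrightarrow> t2 \<in> {0..T} \<Longrightarrow>
           AE x in lebesgue_on \<Omega>. \<bar>\<alpha> x t1 - \<alpha> x t2\<bar> \<le> L\<alpha> * \<bar>t1 - t2\<bar>"
    and "\<And>t1 t2. t1 \<in> {0..T} \<Longrightarrow> t2 \<in> {0..T} \<Longrightarrow>
           AE x in lebesgue_on \<Omega>. \<bar>\<beta> x t1 - \<beta> x t2\<bar> \<le> L\<beta> * \<bar>t1 - t2\<bar>"
    and "\<And>t1 t2. t1 \<in> {0..T} \<Longrightarrow> t2 \<in> {0..T} \<Longrightarrow>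
           AE x in lebesgue_on \<Omega>. \<bar>\<gamma> x t1 - \<gamma> x t2\<bar> \<le> L\<gamma> * \<bar>t1 - t2\<bar>"
    and "\<And>t1 t2. t1 \<in> {0..T} \<Longrightarrow> t2 \<in> {0..T} \<Longrightarrow>
           Lp_norm \<Omega> 3 (\<lambda>x. f x t1 - f x t2) \<le> Lf * \<bar>t1 - t2\<bar>"
  shows "\<exists>dt0 > 0. \<exists>CS. \<forall>K::nat. K > 0 \<and> T / real K \<le> dt0 \<longrightarrow>
           (\<forall>m S. semidiscrete_solution \<Omega> T \<phi> \<alpha> \<beta> \<gamma> f S0 K m S \<longrightarrow>
              (\<forall>k\<le>K. Lp_norm \<Omega> (3/2) (S k) \<le> CS))"
proof -
  define M where "M = lebesgue_on \<Omega>"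
  define L where "L = max L\<gamma> 0"
  define c where "c = 2*(1+L*\<phi>u)/(\<phi>l*\<gamma>l)"
  define A0 where "A0 = (\<integral>x. \<bar>f x 0\<bar>^3 \<partial>M)"
  define Fb where "Fb = 4*((\<bar>Lf\<bar>*T)^3 + A0)/3"
  define E0c where "E0c = (\<integral>x. \<phi> x * \<gamma> x 0 * sqrt\<bar>S0 x\<bar>^3/3 \<partial>M)"
  define B where "B = exp(2*c*T)*(E0c + T*Fb)"
  define CS where "CS = max (Lp_norm \<Omega> (3/2) S0) ((3*B/(\<phi>l*\<gamma>l)) powr (2/3))"
  have L0: "0 \<le> L" by (simp add: L_def)
  have c0: "0 < c" unfolding c_def using L0 assms(6,7,13) by (intro divide_pos_pos) (auto intro!: add_pos_nonneg)
  have Tin0: "0 \<in> {0..T}" using assms(4) by simp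
  have LpS0: "Lp \<Omega> (3/2) S0" using assms(5) by (simp add: W1p0_def)
  have phiAE: "AE x in M. \<phi>l \<le> \<phi> x \<and> \<phi> x \<le> \<phi>u" and phim: "\<phi> \<in> borel_measurable M"
    using assms(8) unfolding Linf_between_def M_def by auto
  have gamAE: "AE x in M. \<gamma>l \<le> \<gamma> x t \<and> \<gamma> x t \<le> \<gamma>u" and gamm: "(\<lambda>x. \<gamma> x t) \<in> borel_measurable M"
    if "t \<in> {0..T}" for t using assms(18)[OF that] unfolding Linf_between_def M_def by auto
  have fm: "(\<lambda>x. f x t) \<in> borel_measurable M" and fi: "integrable M (\<lambda>x. \<bar>f x t\<bar>^3)"
    if "t \<in> {0..T}" for t using assms(15)[OF that] unfolding Lp_def M_def abs3 by auto
  have A00: "0 \<le> A0" unfolding A0_def by (rule integral_nonneg_AE) auto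
  have Fb0: "0 \<le> Fb" unfolding Fb_def using A00 assms(4) by simp
  have fbound: "(\<integral>x. \<bar>f x t\<bar>^3 \<partial>M) \<le> 4*((\<bar>Lf\<bar>*T)^3 + A0)" if t: "t \<in> {0..T}" for t
  proof -
    note [measurable] = fm[OF t] fm[OF Tin0]
    have idiff: "integrable M (\<lambda>x. \<bar>f x t - f x 0\<bar>^3)"
      apply (rule Bochner_Integration.integrable_bound[where f="\<lambda>x. 4*(\<bar>f x t\<bar>^3+\<bar>f x 0\<bar>^3)"])
        using fi[OF t] fi[OF Tin0] apply simp
       apply measurable
      using cube_diff by simp
    have "(\<integral>x. \<bar>f x t\<bar>^3 \<partial>M) \<le> (\<integral>x. 4*(\<bar>f x t - f x 0\<bar>^3+\<bar>f x 0\<bar>^3) \<partial>M)"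
      apply (rule integral_mono)
        using fi[OF t] apply simp
       using idiff fi[OF Tin0] apply simp
      using cube_tri by simp
    also have "\<dots> = 4*((\<integral>x. \<bar>f x t - f x 0\<bar>^3 \<partial>M) + A0)"
      using idiff fi[OF Tin0] by (simp add: A0_def)
    also have "(\<integral>x. \<bar>f x t - f x 0\<bar>^3 \<partial>M) \<le> (\<bar>Lf\<bar>*T)^3"
    proof -
      define X where "X = (\<integral>x. \<bar>f x t - f x 0\<bar>^3 \<partial>M)"
      have X0: "0 \<le> X" unfolding X_def by (rule integral_nonneg_AE) auto
      have "X powr (1/3) \<le> Lf * \<bar>t - 0\<bar>"
        using assms(22)[OF t Tin0] by (simp add: Lp_norm_def X_def M_def abs3)
      also have "\<dots> \<le> \<bar>Lf\<bar>*T"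
      proof -
        have "Lf * \<bar>t - 0\<bar> \<le> \<bar>Lf * \<bar>t - 0\<bar>\<bar>" by (rule abs_ge_self)
        also have "\<dots> = \<bar>Lf\<bar> * t" using t by (simp add: abs_mult)
        also have "\<dots> \<le> \<bar>Lf\<bar> * T" using t by (intro mult_left_mono) auto
        finally show ?thesis .
      qed
      finally have h: "X powr (1/3) \<le> \<bar>Lf\<bar>*T" .
      have "X = (X powr (1/3))^3" using X0
        by (simp add: powr_realpow'[symmetric] powr_powr del: powr_realpow')
      also have "\<dots> \<le> (\<bar>Lf\<bar>*T)^3" using h by (intro power_mono) auto
      finally show ?thesis by (simp add: X_def)
    qed
    finally show ?thesis by simp
  qed
  have E0c0: "0 \<le> E0c" unfolding E0c_def
    apply (rule integral_nonneg_AE)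
    using phiAE gamAE[OF Tin0] apply eventually_elim
    using assms(6,13) by auto
  have main: "\<forall>K::nat. K > 0 \<and> T / real K \<le> 1/(2*c) \<longrightarrow>
           (\<forall>m S. semidiscrete_solution \<Omega> T \<phi> \<alpha> \<beta> \<gamma> f S0 K m S \<longrightarrow>
              (\<forall>k\<le>K. Lp_norm \<Omega> (3/2) (S k) \<le> CS))"
  proof (intro allI impI)
    fix K :: nat and m S k
    assume K: "0 < K \<and> T / real K \<le> 1 / (2 * c)"
      and sol: "semidiscrete_solution \<Omega> T \<phi> \<alpha> \<beta> \<gamma> f S0 K m S" and kK: "k \<le> K"
    define dt where "dt = T / real K"
    define E where "E j = (\<integral>x. \<phi> x * \<gamma> x (real j * dt) * sqrt\<bar>S j x\<bar>^3/3 \<partial>M)" for j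
    have dt0: "0 < dt" using K assms(4) by (simp add: dt_def)
    have cdt: "c*dt \<le> 1/2" using K c0 by (simp add: dt_def field_simps)
    have S0eq: "S 0 = S0" and hk: "\<forall>k\<in>{1..K}. Lp \<Omega> (3/2) (S k) \<and>
        (\<exists>dm. W_div \<Omega> 3 (m k) dm \<and>
          (\<forall>v g. W_div \<Omega> 3 v g \<longrightarrow>
             (\<integral>x. (\<alpha> x (real k * dt) + \<beta> x (real k * dt) * norm (m k x)) * (m k x \<bullet> v x) \<partial>lebesgue_on \<Omega>)
             - (\<integral>x. g x * S k x \<partial>lebesgue_on \<Omega>) = 0) \<and>
          (\<forall>q. Lp \<Omega> (3/2) q \<longrightarrow>
             (\<integral>x. \<phi> x / dt * (rho \<gamma> (real k * dt) x (S k x) - rho \<gamma> (real (k - 1) * dt) x (S (k - 1) x)) * q x \<partial>lebesgue_on \<Omega>)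
             + (\<integral>x. dm x * q x \<partial>lebesgue_on \<Omega>)
             = (\<integral>x. f x (real k * dt) * q x \<partial>lebesgue_on \<Omega>)))"
      using sol unfolding semidiscrete_solution_def Let_def dt_def[symmetric] by auto
    have trange: "real j * dt \<in> {0..T}" if "j \<le> K" for j
    proof -
      have "real j * dt \<le> real K * dt" using that dt0 by (intro mult_right_mono) auto
      also have "real K * dt = T" using K by (simp add: dt_def)
      finally show ?thesis using dt0 by simp
    qed
    have LpS: "Lp \<Omega> (3/2) (S j)" if "j \<le> K" for j
      using that hk LpS0 S0eq by (cases "j = 0") auto
    have Smeas: "S j \<in> borel_measurable M" and Sint: "integrable M (\<lambda>x. sqrt\<bar>S j x\<bar>^3)" if "j \<le> K" for j
      using LpS[OF that] by (auto simp: Lp_def M_def P_eq)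
    have Enn: "0 \<le> E j" if "j \<le> K" for j unfolding E_def
      apply (rule integral_nonneg_AE)
      using phiAE gamAE[OF trange[OF that]] apply eventually_elim
      using assms(6,13) by auto
    have E0: "E 0 = E0c" by (simp add: E_def E0c_def S0eq)
    have stepk: "E k \<le> E (k-1) + dt*Fb + dt*c*E k \<and> \<phi>l*\<gamma>l*(\<integral>x. sqrt\<bar>S k x\<bar>^3 \<partial>M) \<le> 3*E k"
      if k: "k \<in> {1..K}" for k
    proof -
      have kK': "k \<le> K" "k - 1 \<le> K" using k by auto
      obtain dm where Wd: "W_div \<Omega> 3 (m k) dm"
        and eq1: "\<forall>v g. W_div \<Omega> 3 v g \<longrightarrow>
             (\<integral>x. (\<alpha> x (real k * dt) + \<beta> x (real k * dt) * norm (m k x)) * (m k x \<bullet> v x) \<partial>lebesgue_on \<Omega>)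
             - (\<integral>x. g x * S k x \<partial>lebesgue_on \<Omega>) = 0"
        and eq2: "\<forall>q. Lp \<Omega> (3/2) q \<longrightarrow>
             (\<integral>x. \<phi> x / dt * (rho \<gamma> (real k * dt) x (S k x) - rho \<gamma> (real (k - 1) * dt) x (S (k - 1) x)) * q x \<partial>lebesgue_on \<Omega>)
             + (\<integral>x. dm x * q x \<partial>lebesgue_on \<Omega>)
             = (\<integral>x. f x (real k * dt) * q x \<partial>lebesgue_on \<Omega>)"
        using hk k by blast
      have tk: "real k * dt \<in> {0..T}" and tk': "real (k-1) * dt \<in> {0..T}" using trange kK' by auto
      have hdiff: "\<bar>real (k-1) * dt - real k * dt\<bar> = dt" using k dt0 by (simp add: of_nat_diff algebra_simps)
      have Lle: "L\<gamma> * dt \<le> L * dt" using dt0 by (simp add: L_def)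
      have D: "0 \<le> (\<integral>x. dm x * S k x \<partial>M)"
      proof -
        have "0 \<le> (\<integral>x. (\<alpha> x (real k * dt) + \<beta> x (real k * dt) * norm (m k x)) * (m k x \<bullet> m k x) \<partial>M)"
        proof (rule integral_nonneg_AE)
          have a1: "AE x in M. \<alpha>l \<le> \<alpha> x (real k * dt)" using assms(16)[OF tk] unfolding Linf_between_def M_def by auto
          have a2: "AE x in M. \<beta>l \<le> \<beta> x (real k * dt)" using assms(17)[OF tk] unfolding Linf_between_def M_def by auto
          show "AE x in M. 0 \<le> (\<alpha> x (real k * dt) + \<beta> x (real k * dt) * norm (m k x)) * (m k x \<bullet> m k x)"
            using a1 a2
          proof eventually_elim
            case (elim x)
            have "0 \<le> \<alpha> x (real k * dt)" "0 \<le> \<beta> x (real k * dt)" using elim assms(9,11) by auto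
            then show ?case by (intro mult_nonneg_nonneg add_nonneg_nonneg) auto
          qed
        qed
        then show ?thesis using eq1 Wd by (auto simp: M_def)
      qed
      have eq: "(\<integral>x. \<phi> x / dt * (\<gamma> x (real k * dt) * (sgn (S k x) * sqrt\<bar>S k x\<bar>) - \<gamma> x (real (k-1) * dt) * (sgn (S (k-1) x) * sqrt\<bar>S (k-1) x\<bar>)) * S k x \<partial>M)
          + (\<integral>x. dm x * S k x \<partial>M) = (\<integral>x. f x (real k * dt) * S k x \<partial>M)"
        using eq2 LpS[OF kK'(1)] by (simp add: rho_eq M_def)
      have ae: "AE x in M. \<phi>l \<le> \<phi> x \<and> \<phi> x \<le> \<phi>u \<and> \<gamma>l \<le> \<gamma> x (real k * dt) \<and> \<gamma> x (real k * dt) \<le> \<gamma>u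
          \<and> \<gamma>l \<le> \<gamma> x (real (k-1) * dt) \<and> \<gamma> x (real (k-1) * dt) \<le> \<gamma>u
          \<and> \<gamma> x (real (k-1) * dt) \<le> \<gamma> x (real k * dt) + L*dt"
        using phiAE gamAE[OF tk] gamAE[OF tk'] assms(21)[OF tk' tk, folded M_def]
        apply eventually_elim
        using hdiff Lle by auto
      have st: "(\<integral>x. \<phi> x * \<gamma> x (real k * dt) * sqrt\<bar>S k x\<bar>^3/3 \<partial>M) \<le> (\<integral>x. \<phi> x * \<gamma> x (real (k-1) * dt) * sqrt\<bar>S (k-1) x\<bar>^3/3 \<partial>M)
         + dt * (\<integral>x. \<bar>f x (real k * dt)\<bar>^3/3 \<partial>M) + dt * (2*(1+L*\<phi>u)/(\<phi>l*\<gamma>l)) * (\<integral>x. \<phi> x * \<gamma> x (real k * dt) * sqrt\<bar>S k x\<bar>^3/3 \<partial>M)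
       \<and> \<phi>l*\<gamma>l*(\<integral>x. sqrt\<bar>S k x\<bar>^3 \<partial>M) \<le> 3*(\<integral>x. \<phi> x * \<gamma> x (real k * dt) * sqrt\<bar>S k x\<bar>^3/3 \<partial>M)"
        by (rule step[OF phim gamm[OF tk] gamm[OF tk'] Smeas[OF kK'(1)] Smeas[OF kK'(2)] fm[OF tk]
              Sint[OF kK'(1)] Sint[OF kK'(2)] fi[OF tk] ae dt0 L0 assms(6) assms(13) assms(7) assms(14) eq D])
      have "(\<integral>x. \<bar>f x (real k * dt)\<bar>^3/3 \<partial>M) \<le> Fb"
        using fbound[OF tk] by (simp add: Fb_def)
      then have "dt * (\<integral>x. \<bar>f x (real k * dt)\<bar>^3/3 \<partial>M) \<le> dt * Fb" using dt0 by (intro mult_left_mono) auto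
      then show ?thesis using st k by (simp add: E_def c_def of_nat_diff mult.assoc)
    qed
    have gron: "E j \<le> (1+2*(c*dt))^j * (E 0 + real j*dt*Fb)" if "j \<le> K" for j
      using that
    proof (induction j)
      case 0 then show ?case by simp
    next
      case (Suc j)
      have js: "Suc j \<in> {1..K}" using Suc by auto
      have IH: "E j \<le> (1+2*(c*dt))^j * (E 0 + real j*dt*Fb)" using Suc by auto
      have "E (Suc j) \<le> (E j + dt*Fb) + (c*dt) * E (Suc j)" using stepk[OF js] by (simp add: algebra_simps)
      then have 1: "E (Suc j) \<le> (1+2*(c*dt)) * (E j + dt*Fb)"
        by (rule gron_step) (use Enn[OF Suc.prems] c0 dt0 cdt in auto)
      have pj: "1 \<le> (1+2*(c*dt))^j" using c0 dt0 by (intro one_le_power) auto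
      have "dt*Fb \<le> (1+2*(c*dt))^j * (dt*Fb)" using pj dt0 Fb0 mult_right_mono[OF pj, of "dt*Fb"] by simp
      then have "E j + dt*Fb \<le> (1+2*(c*dt))^j * (E 0 + real (Suc j)*dt*Fb)"
        using IH by (simp add: algebra_simps)
      then have "(1+2*(c*dt)) * (E j + dt*Fb) \<le> (1+2*(c*dt)) * ((1+2*(c*dt))^j * (E 0 + real (Suc j)*dt*Fb))"
        using c0 dt0 by (intro mult_left_mono) auto
      with 1 show ?case by simp
    qed
    have EB: "E j \<le> B" if "j \<le> K" for j
    proof -
      have jdt: "real j * dt \<le> T" using trange[OF that] by simp
      have "(1+2*(c*dt))^j \<le> exp (2*(c*dt))^j"
        using c0 dt0 by (intro power_mono) auto
      also have "\<dots> = exp (2*c*(real j*dt))" by (simp add: exp_of_nat_mult[symmetric] algebra_simps)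
      also have "\<dots> \<le> exp (2*c*T)" using jdt c0 by simp
      finally have p: "(1+2*(c*dt))^j \<le> exp (2*c*T)" .
      have q: "E 0 + real j*dt*Fb \<le> E0c + T*Fb" using jdt Fb0 E0 by (simp add: mult_right_mono)
      have "E j \<le> (1+2*(c*dt))^j * (E 0 + real j*dt*Fb)" by (rule gron[OF that])
      also have "\<dots> \<le> exp (2*c*T) * (E0c + T*Fb)"
        using p q E0c0 Fb0 dt0 E0 by (intro mult_mono) auto
      finally show ?thesis by (simp add: B_def)
    qed
    show "Lp_norm \<Omega> (3/2) (S k) \<le> CS"
    proof (cases "k = 0")
      case True then show ?thesis by (simp add: S0eq CS_def)
    next
      case False
      then have k1: "k \<in> {1..K}" using kK by auto
      define N where "N = (\<integral>x. sqrt\<bar>S k x\<bar>^3 \<partial>M)"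
      have N0: "0 \<le> N" unfolding N_def by (rule integral_nonneg_AE) auto
      have "\<phi>l*\<gamma>l*N \<le> 3*B" using stepk[OF k1] EB[OF kK] unfolding N_def by linarith
      then have NB: "N \<le> 3*B/(\<phi>l*\<gamma>l)" using assms(6,13) by (simp add: field_simps)
      have "Lp_norm \<Omega> (3/2) (S k) = N powr (2/3)" by (simp add: Lp_norm_def N_def M_def P_eq)
      also have "\<dots> \<le> (3*B/(\<phi>l*\<gamma>l)) powr (2/3)" using NB N0 by (intro powr_mono2) auto
      finally show ?thesis by (simp add: CS_def)
    qed
  qed
  show ?thesis
    apply (rule exI[of _ "1/(2*c)"])
    using c0 main by auto
qed

end
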